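(* Let $n\geq 6$ and $k\in\{3,\dots,n-3\}$. Every $k$-spectrally monomorphic $n$-tournament is transitive.
   Context: An $n$-tournament is a digraph on $n$ vertices in which every pair of distinct vertices is joined by exactly one arc. Its adjacency matrix $A=(a_{ij})$ (w.r.t. an ordering $v_1,\dots,v_n$) has $a_{ij}=1$ if $v_i$ dominates $v_j$ and $0$ otherwise. A tournament is $k$-spectrally monomorphic if all the $k\times k$ principal submatrices of its adjacency matrix have the same characteristic polynomial. A tournament is transitive if whenever $u$ dominates $v$ and $v$ dominates $w$, then $u$ dominates $w$. *)

theory Defs
  imports "Jordan_Normal_Form.Char_Poly" "Jordan_Normal_Form.DL_Submatrix"
begin

definition tournament_matrix :: "nat \<Rightarrow> int mat \<Rightarrow> bool" where
  "tournament_matrix n A \<longleftrightarrow> A \<in> carrier_mat n n \<and>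
     (\<forall>i<n. \<forall>j<n. A $$ (i,j) \<in> {0,1}) \<and>
     (\<forall>i<n. A $$ (i,i) = 0) \<and>
     (\<forall>i<n. \<forall>j<n. i \<noteq> j \<longrightarrow> A $$ (i,j) + A $$ (j,i) = 1)"

definition principal_submatrix :: "'a mat \<Rightarrow> nat set \<Rightarrow> 'a mat" where
  "principal_submatrix A I = submatrix A I I"

definition spectrally_monomorphic :: "nat \<Rightarrow> nat \<Rightarrow> int mat \<Rightarrow> bool" where
  "spectrally_monomorphic n k A \<longleftrightarrow>
     (\<forall>I J. I \<subseteq> {0..<n} \<longrightarrow> J \<subseteq> {0..<n} \<longrightarrow> card I = k \<longrightarrow> card J = k \<longrightarrow>
        char_poly (principal_submatrix A I) = char_poly (principal_submatrix A J))"

definition transitive_tournament :: "nat \<Rightarrow> int mat \<Rightarrow> bool" where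
  "transitive_tournament n A \<longleftrightarrow>
     (\<forall>u<n. \<forall>v<n. \<forall>w<n. A $$ (u,v) = 1 \<longrightarrow> A $$ (v,w) = 1 \<longrightarrow> A $$ (u,w) = 1)"

end

theory Submission
  imports Defs
begin


lemma pick_delete:
  assumes fin: "finite I" and j: "j < card I" and a: "a < card I - 1"
  shows "pick (I - {pick I j}) a = pick I (if a < j then a else Suc a)"
proof -
  define a' where "a' = (if a < j then a else Suc a)"
  have a'c: "a' < card I" using a j unfolding a'_def by auto
  define x where "x = pick I a'"
  define p where "p = pick I j"
  have xI: "x \<in> I" using pick_in_set[of a' I] a'c unfolding x_def by auto
  have cx: "card {y\<in>I. y < x} = a'" using card_pick[of a' I] a'c unfolding x_def by auto
  have pI: "p \<in> I" using pick_in_set[of j I] j unfolding p_def by auto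
  have "card {y\<in>I - {p}. y < x} = a"
  proof (cases "a < j")
    case True
    then have "x < p" unfolding x_def p_def a'_def using pick_mono[of j I a] j by auto
    then have "{y\<in>I - {p}. y < x} = {y\<in>I. y < x}" by auto
    then show ?thesis using cx True a'_def by auto
  next
    case False
    then have "p < x" unfolding x_def p_def a'_def using pick_mono[of "Suc a" I j] a'c a'_def by auto
    then have e: "{y\<in>I - {p}. y < x} = {y\<in>I. y < x} - {p}" by auto
    have "p \<in> {y\<in>I. y < x}" using pI \<open>p < x\<close> by auto
    moreover have "finite {y\<in>I. y < x}" using fin by auto
    ultimately have "card ({y\<in>I. y < x} - {p}) = a' - 1" using cx by (simp add: card_Diff_singleton)
    then show ?thesis using e False a'_def by auto
  qed
  moreover have "x \<in> I - {p}"
  proof -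
    have "a' \<noteq> j" unfolding a'_def by auto
    then have "x \<noteq> p" unfolding x_def p_def
      using pick_mono[of a' I j] pick_mono[of j I a'] a'c j by (metis nat_neq_iff less_irrefl)
    then show ?thesis using xI by auto
  qed
  ultimately have "pick (I - {p}) a = x" using pick_card_in_set[of x "I - {p}"] by metis
  then show ?thesis unfolding x_def p_def a'_def by simp
qed

lemma card_lt_set: "I \<subseteq> {0..<n} \<Longrightarrow> {i. i < n \<and> i \<in> I} = I" by auto

lemma submatrix_delete:
  assumes A: "A \<in> carrier_mat n n" and I: "I \<subseteq> {0..<n}" and j: "j < card I"
  shows "mat_delete (submatrix A I I) j j = submatrix A (I - {pick I j}) (I - {pick I j})"
proof -
  have fin: "finite I" using I finite_subset by blast
  have pI: "pick I j \<in> I" using pick_in_set[of j I] j by auto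
  have d1: "dim_row (submatrix A I I) = card I" "dim_col (submatrix A I I) = card I"
    using A I by (auto simp: dim_submatrix card_lt_set)
  have I2: "I - {pick I j} \<subseteq> {0..<n}" using I by auto
  have e: "{i. i<n \<and> i \<in> I \<and> i \<noteq> pick I j} = I - {pick I j}" using I by auto
  have d2: "dim_row (submatrix A (I - {pick I j}) (I - {pick I j})) = card I - 1"
     "dim_col (submatrix A (I - {pick I j}) (I - {pick I j})) = card I - 1"
  proof -
    show "dim_row (submatrix A (I - {pick I j}) (I - {pick I j})) = card I - 1"
     "dim_col (submatrix A (I - {pick I j}) (I - {pick I j})) = card I - 1"
      using A pI fin unfolding dim_submatrix by (auto simp: e)
  qed
  show ?thesis
  proof (rule eq_matI)
    show "dim_row (mat_delete (submatrix A I I) j j) = dim_row (submatrix A (I - {pick I j}) (I - {pick I j}))"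
      using d1 d2 by simp
    show "dim_col (mat_delete (submatrix A I I) j j) = dim_col (submatrix A (I - {pick I j}) (I - {pick I j}))"
      using d1 d2 by simp
    fix a b assume ab: "a < dim_row (submatrix A (I - {pick I j}) (I - {pick I j}))"
      "b < dim_col (submatrix A (I - {pick I j}) (I - {pick I j}))"
    then have ab': "a < card I - 1" "b < card I - 1" using d2 by auto
    have l: "mat_delete (submatrix A I I) j j $$ (a,b) = submatrix A I I $$ (if a < j then a else Suc a, if b < j then b else Suc b)"
      unfolding mat_delete_def using ab' d1 by auto
    also have "\<dots> = A $$ (pick I (if a < j then a else Suc a), pick I (if b < j then b else Suc b))"
      by (rule submatrix_index, insert ab' A I, auto simp: card_lt_set)
    also have "\<dots> = submatrix A (I - {pick I j}) (I - {pick I j}) $$ (a,b)"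
      by (subst submatrix_index, insert ab' A I2 pI fin, auto simp: e pick_delete[OF fin j])
    finally show "mat_delete (submatrix A I I) j j $$ (a, b) = submatrix A (I - {pick I j}) (I - {pick I j}) $$ (a, b)" .
  qed
qed



lemma bij_pick: assumes "finite I" shows "bij_betw (pick I) {..<card I} I"
proof -
  have inj: "inj_on (pick I) {..<card I}"
    by (rule inj_onI, metis lessThan_iff nat_neq_iff pick_mono less_irrefl)
  have sub: "pick I ` {..<card I} \<subseteq> I" using pick_in_set by auto
  have "card (pick I ` {..<card I}) = card I" using card_image[OF inj] by simp
  then have "pick I ` {..<card I} = I" using card_subset_eq[OF assms sub] by simp
  then show ?thesis using inj unfolding bij_betw_def by auto
qed

lemma pderiv_Q:
  fixes A :: "'a :: idom mat"
  assumes A: "A \<in> carrier_mat n n" and I: "I \<subseteq> {0..<n}"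
  shows "pderiv (char_poly (submatrix A I I)) = (\<Sum>i\<in>I. char_poly (submatrix A (I - {i}) (I - {i})))"
proof -
  have fin: "finite I" using I finite_subset by blast
  have e: "{i. i<n \<and> i \<in> I} = I" using I by auto
  have B: "submatrix A I I \<in> carrier_mat (card I) (card I)"
    using carrier_matD[OF A] unfolding carrier_mat_def by (simp add: dim_submatrix e)
  have "pderiv (char_poly (submatrix A I I)) = (\<Sum>j<card I. char_poly (mat_delete (submatrix A I I) j j))"
    by (rule pderiv_char_poly[OF B])
  also have "\<dots> = (\<Sum>j<card I. char_poly (submatrix A (I - {pick I j}) (I - {pick I j})))"
    by (rule sum.cong, auto simp: submatrix_delete[OF A I])
  also have "\<dots> = (\<Sum>i\<in>I. char_poly (submatrix A (I - {i}) (I - {i})))"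
    by (rule sum.reindex_bij_betw[OF bij_pick[OF fin]])
  finally show ?thesis .
qed

lemma double_count:
  fixes f :: "'b set \<Rightarrow> 'c :: comm_ring_1"
  assumes fin: "finite I"
  shows "(\<Sum>J\<in>{J. J \<subseteq> I \<and> card J = Suc s}. \<Sum>i\<in>J. f (J - {i}))
       = of_nat (card I - s) * (\<Sum>J\<in>{J. J \<subseteq> I \<and> card J = s}. f J)"
proof -
  have "(\<Sum>J\<in>{J. J \<subseteq> I \<and> card J = Suc s}. \<Sum>i\<in>J. f (J - {i}))
     = (\<Sum>(J,i)\<in>Sigma {J. J \<subseteq> I \<and> card J = Suc s} (\<lambda>J. J). f (J - {i}))"
    by (rule sum.Sigma, insert fin, auto intro: finite_subset)
  also have "\<dots> = (\<Sum>(J,i)\<in>Sigma {J. J \<subseteq> I \<and> card J = s} (\<lambda>J. I - J). f J)"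
    apply (rule sum.reindex_bij_witness[where i = "\<lambda>(J,i). (insert i J, i)" and j = "\<lambda>(J,i). (J - {i}, i)"])
    using fin apply (auto simp: card_insert_if)
    apply (metis card_insert_disjoint finite_subset)
    done
  also have "\<dots> = (\<Sum>J\<in>{J. J \<subseteq> I \<and> card J = s}. \<Sum>i\<in>I - J. f J)"
    by (rule sum.Sigma[symmetric], insert fin, auto intro: finite_subset)
  also have "\<dots> = (\<Sum>J\<in>{J. J \<subseteq> I \<and> card J = s}. of_nat (card I - s) * f J)"
    by (rule sum.cong, insert fin, auto simp: card_Diff_subset finite_subset)
  also have "\<dots> = of_nat (card I - s) * (\<Sum>J\<in>{J. J \<subseteq> I \<and> card J = s}. f J)"
    by (simp add: sum_distrib_left)
  finally show ?thesis .
qed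

lemma pderiv_sum': "pderiv (sum f S) = (\<Sum>x\<in>S. pderiv (f x))"
  by (induction S rule: infinite_finite_induct, auto simp: pderiv_add)

lemma iter_deriv:
  fixes A :: "'a :: idom mat"
  assumes A: "A \<in> carrier_mat n n" and I: "I \<subseteq> {0..<n}"
  shows "j \<le> card I \<Longrightarrow> (pderiv ^^ j) (char_poly (submatrix A I I)) =
      Polynomial.smult (of_nat (fact j)) (\<Sum>J\<in>{J. J \<subseteq> I \<and> card J = card I - j}. char_poly (submatrix A J J))"
proof (induction j)
  case 0
  have fin: "finite I" using I finite_subset by blast
  have "\<And>J. J \<subseteq> I \<Longrightarrow> card J = card I \<Longrightarrow> J = I" using card_subset_eq[OF fin] by blast
  then have "{J. J \<subseteq> I \<and> card J = card I} = {I}" by auto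
  then show ?case by simp
next
  case (Suc j)
  have fin: "finite I" using I finite_subset by blast
  define s where "s = card I - Suc j"
  have cs: "card I - j = Suc s" using Suc.prems unfolding s_def by auto
  have "(pderiv ^^ Suc j) (char_poly (submatrix A I I)) =
     pderiv (Polynomial.smult (of_nat (fact j)) (\<Sum>J\<in>{J. J \<subseteq> I \<and> card J = Suc s}. char_poly (submatrix A J J)))"
    using Suc by (simp add: cs)
  also have "\<dots> = Polynomial.smult (of_nat (fact j)) (\<Sum>J\<in>{J. J \<subseteq> I \<and> card J = Suc s}. \<Sum>i\<in>J. char_poly (submatrix A (J - {i}) (J - {i})))"
    unfolding pderiv_smult pderiv_sum'
    by (rule arg_cong[where f = "Polynomial.smult _"], rule sum.cong, insert I, auto intro!: pderiv_Q[OF A])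
  also have "\<dots> = Polynomial.smult (of_nat (fact j)) (of_nat (card I - s) * (\<Sum>J\<in>{J. J \<subseteq> I \<and> card J = s}. char_poly (submatrix A J J)))"
    by (subst double_count[OF fin], rule refl)
  also have "card I - s = Suc j" using Suc.prems unfolding s_def by auto
  also have "Polynomial.smult (of_nat (fact j)) (of_nat (Suc j) * (\<Sum>J\<in>{J. J \<subseteq> I \<and> card J = s}. char_poly (submatrix A J J)))
     = Polynomial.smult (of_nat (fact (Suc j))) (\<Sum>J\<in>{J. J \<subseteq> I \<and> card J = s}. char_poly (submatrix A J J))"
    by (simp add: of_nat_poly smult_smult algebra_simps)
  finally show ?case unfolding s_def .
qed



lemma sum_split_insert:
  fixes g :: "'a set \<Rightarrow> int"
  assumes fin: "finite S" and a: "a \<notin> S"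
  shows "(\<Sum>T\<in>{T. T \<subseteq> insert a S \<and> card T = Suc r}. g T)
       = (\<Sum>T\<in>{T. T \<subseteq> S \<and> card T = Suc r}. g T) + (\<Sum>P\<in>{P. P \<subseteq> S \<and> card P = r}. g (insert a P))"
proof -
  have eq: "{T. T \<subseteq> insert a S \<and> card T = Suc r} =
     {T. T \<subseteq> S \<and> card T = Suc r} \<union> insert a ` {P. P \<subseteq> S \<and> card P = r}"
  proof (rule Set.set_eqI, rule HOL.iffI)
    fix T assume T: "T \<in> {T. T \<subseteq> insert a S \<and> card T = Suc r}"
    show "T \<in> {T. T \<subseteq> S \<and> card T = Suc r} \<union> insert a ` {P. P \<subseteq> S \<and> card P = r}"
    proof (cases "a \<in> T")
      case True
      have "finite T" using T fin finite_subset by auto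
      then have "T = insert a (T - {a})" "T - {a} \<subseteq> S" "card (T - {a}) = r" using T True by auto
      then show ?thesis by blast
    next
      case False then show ?thesis using T by auto
    qed
  next
    fix T assume "T \<in> {T. T \<subseteq> S \<and> card T = Suc r} \<union> insert a ` {P. P \<subseteq> S \<and> card P = r}"
    then show "T \<in> {T. T \<subseteq> insert a S \<and> card T = Suc r}"
      using a fin by (auto simp: card_insert_if) (metis card_insert_disjoint finite_subset in_mono)
  qed
  have inj: "inj_on (insert a) {P. P \<subseteq> S \<and> card P = r}"
    by (rule inj_onI, insert a, auto)
  have disj: "{T. T \<subseteq> S \<and> card T = Suc r} \<inter> insert a ` {P. P \<subseteq> S \<and> card P = r} = {}"
    using a by auto
  show ?thesis unfolding eq
    by (subst sum.union_disjoint, insert fin disj, auto simp: sum.reindex[OF inj])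
qed

lemma const_sums:
  fixes g :: "'a set \<Rightarrow> int"
  assumes "finite X" "r \<le> s" "s + r \<le> card X"
    and "\<forall>S S'. S \<subseteq> X \<longrightarrow> S' \<subseteq> X \<longrightarrow> card S = s \<longrightarrow> card S' = s \<longrightarrow>
       (\<Sum>T\<in>{T. T \<subseteq> S \<and> card T = r}. g T) = (\<Sum>T\<in>{T. T \<subseteq> S' \<and> card T = r}. g T)"
    and "T \<subseteq> X" "T' \<subseteq> X" "card T = r" "card T' = r"
  shows "g T = g T'"
  using assms
proof (induction r arbitrary: X s g T T')
  case 0
  have "finite T" "finite T'" using "0.prems"(1,5,6) finite_subset by blast+
  then have "T = {}" "T' = {}" using "0.prems"(7,8) by simp_all
  then show ?case by simp
next
  case (Suc r)
  note finX = Suc.prems(1)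
  have swap: "g (insert a P) = g (insert b P)"
    if ab: "a \<in> X" "b \<in> X" "a \<noteq> b" and P: "P \<subseteq> X - {a,b}" "card P = r" for a b P
  proof -
    define X' where "X' = X - {a,b}"
    define h where "h = (\<lambda>P. g (insert a P) - g (insert b P))"
    have finX': "finite X'" using finX unfolding X'_def by auto
    have cX': "card X' = card X - 2" unfolding X'_def using ab finX
      by (simp add: card_Diff_subset)
    have zero: "(\<Sum>P\<in>{P. P \<subseteq> S \<and> card P = r}. h P) = 0" if S: "S \<subseteq> X'" "card S = s - 1" for S
    proof -
      have finS: "finite S" using S finX' finite_subset by blast
      have aS: "a \<notin> S" "b \<notin> S" using S unfolding X'_def by auto
      have s1: "s \<ge> 1" using Suc.prems by auto
      have "insert a S \<subseteq> X" "insert b S \<subseteq> X" "card (insert a S) = s" "card (insert b S) = s"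
        using S ab aS finS s1 unfolding X'_def by auto
      then have "(\<Sum>T\<in>{T. T \<subseteq> insert a S \<and> card T = Suc r}. g T) = (\<Sum>T\<in>{T. T \<subseteq> insert b S \<and> card T = Suc r}. g T)"
        using Suc.prems(4) by blast
      then show ?thesis unfolding sum_split_insert[OF finS aS(1)] sum_split_insert[OF finS aS(2)] h_def
        by (simp add: sum_subtractf)
    qed
    have hc: "h Q = h Q'" if "Q \<subseteq> X'" "Q' \<subseteq> X'" "card Q = r" "card Q' = r" for Q Q'
    proof (rule Suc.IH[of X' "s - 1" h])
      show "finite X'" by fact
      show "r \<le> s - 1" using Suc.prems by auto
      show "s - 1 + r \<le> card X'" using Suc.prems cX' by auto
      show "\<forall>S S'. S \<subseteq> X' \<longrightarrow> S' \<subseteq> X' \<longrightarrow> card S = s - 1 \<longrightarrow> card S' = s - 1 \<longrightarrow>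
         (\<Sum>T\<in>{T. T \<subseteq> S \<and> card T = r}. h T) = (\<Sum>T\<in>{T. T \<subseteq> S' \<and> card T = r}. h T)"
        using zero by simp
    qed (use that in auto)
    have "s - 1 \<le> card X'" using Suc.prems cX' by auto
    then obtain S0 where S0: "S0 \<subseteq> X'" "card S0 = s - 1" "finite S0" by (rule obtain_subset_with_card_n)
    have PX': "P \<subseteq> X'" using P unfolding X'_def by auto
    have "(\<Sum>Q\<in>{Q. Q \<subseteq> S0 \<and> card Q = r}. h Q) = (\<Sum>Q\<in>{Q. Q \<subseteq> S0 \<and> card Q = r}. h P)"
      by (rule sum.cong, insert S0 PX' P, auto intro!: hc)
    also have "\<dots> = of_nat (card S0 choose r) * h P" using n_subsets[OF S0(3)] by simp
    finally have "of_nat (card S0 choose r) * h P = 0" using zero[OF S0(1,2)] by simp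
    moreover have "card S0 choose r \<noteq> 0" using S0 Suc.prems by auto
    ultimately have "h P = 0" by simp
    then show ?thesis unfolding h_def by simp
  qed
  have main: "\<And>T. T \<subseteq> X \<Longrightarrow> card T = Suc r \<Longrightarrow> card (T - T') = m \<Longrightarrow> g T = g T'" for m
  proof (induction m)
    case 0
    have finT: "finite T" "finite T'" using "0.prems" Suc.prems finX finite_subset by blast+
    have "T \<subseteq> T'" using "0.prems" finT by auto
    then have "T = T'" using card_subset_eq[OF finT(2)] "0.prems" Suc.prems by auto
    then show ?case by simp
  next
    case (Suc m)
    have finT: "finite T" "finite T'" using Suc.prems \<open>T' \<subseteq> X\<close> finX finite_subset by blast+
    obtain b where b: "b \<in> T" "b \<notin> T'" using Suc.prems(3) by (metis Diff_eq_empty_iff card_0_eq finT(1) finite_Diff nat.distinct(1) subsetI)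
    have "\<not> T' \<subseteq> T"
    proof
      assume "T' \<subseteq> T"
      then have "T' = T" using card_subset_eq[OF finT(1)] Suc.prems \<open>card T' = Suc r\<close> by auto
      then show False using b by auto
    qed
    then obtain a where a: "a \<in> T'" "a \<notin> T" by auto
    define P where "P = T - {b}"
    have cP: "card P = r" using Suc.prems b finT unfolding P_def by auto
    have PX: "P \<subseteq> X - {a,b}" using Suc.prems a unfolding P_def by auto
    have aX: "a \<in> X" "b \<in> X" using a b Suc.prems \<open>T' \<subseteq> X\<close> by auto
    have "g T = g (insert b P)" using b unfolding P_def by (simp add: insert_absorb)
    also have "\<dots> = g (insert a P)" using swap[OF aX(2) aX(1) _ _ cP] PX a b by auto
    also have "\<dots> = g T'"
    proof (rule Suc.IH)
      show "insert a P \<subseteq> X" using PX aX by auto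
      show "card (insert a P) = Suc r" using cP PX finT unfolding P_def by (auto simp: card_insert_if)
      have "insert a P - T' = (T - T') - {b}" unfolding P_def using a b by auto
      then show "card (insert a P - T') = m" using Suc.prems b finT by auto
    qed
    finally show ?case .
  qed
  show ?case using main Suc.prems by blast
qed



lemma det3: fixes B :: "'a :: comm_ring_1 mat"
  assumes B: "B \<in> carrier_mat 3 3"
  shows "det B = B$$(0,0)*B$$(1,1)*B$$(2,2) - B$$(0,0)*B$$(1,2)*B$$(2,1)
    - B$$(1,0)*B$$(0,1)*B$$(2,2) + B$$(1,0)*B$$(0,2)*B$$(2,1)
    + B$$(2,0)*B$$(0,1)*B$$(1,2) - B$$(2,0)*B$$(0,2)*B$$(1,1)"
proof -
  have d2: "det C = C$$(0,0)*C$$(1,1) - C$$(1,0)*C$$(0,1)" if C: "C \<in> carrier_mat 2 2" for C :: "'a mat"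
  proof -
    have "det C = (\<Sum>i<2. C $$ (i,0) * cofactor C i 0)" by (rule laplace_expansion_column[OF C], simp)
    also have "\<dots> = C$$(0,0)*C$$(1,1) - C$$(1,0)*C$$(0,1)"
      using C by (simp add: numeral_2_eq_2 cofactor_def mat_delete_def det_single)
    finally show ?thesis .
  qed
  have "det B = (\<Sum>i<3. B $$ (i,0) * cofactor B i 0)" by (rule laplace_expansion_column[OF B], simp)
  also have "\<dots> = B $$ (0,0) * cofactor B 0 0 + B $$ (1,0) * cofactor B 1 0 + B $$ (2,0) * cofactor B 2 0"
    by (simp add: numeral_3_eq_3 numeral_2_eq_2)
  also have "cofactor B 0 0 = B$$(1,1)*B$$(2,2) - B$$(2,1)*B$$(1,2)"
    unfolding cofactor_def using B by (subst d2, auto simp: mat_delete_def numeral_2_eq_2)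
  also have "cofactor B 1 0 = -(B$$(0,1)*B$$(2,2) - B$$(2,1)*B$$(0,2))"
    unfolding cofactor_def using B by (subst d2, auto simp: mat_delete_def numeral_2_eq_2)
  also have "cofactor B 2 0 = B$$(0,1)*B$$(1,2) - B$$(1,1)*B$$(0,2)"
    unfolding cofactor_def using B by (subst d2, auto simp: mat_delete_def numeral_2_eq_2)
  finally show ?thesis by (simp add: algebra_simps)
qed

lemma poly_char_poly_0: fixes S :: "'a :: comm_ring_1 mat"
  assumes S: "S \<in> carrier_mat m m"
  shows "poly (char_poly S) 0 = det (- S)"
  unfolding char_poly_def
  by (rule poly_det_cong[of _ m], insert S, auto simp: char_poly_matrix_def)

lemma sub3:
  fixes A :: "'a :: comm_ring_1 mat"
  assumes A: "A \<in> carrier_mat n n" and uvw: "u < v" "v < w" "w < n"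
  shows "poly (char_poly (submatrix A {u,v,w} {u,v,w})) 0 =
    - (A$$(u,u)*A$$(v,v)*A$$(w,w) - A$$(u,u)*A$$(v,w)*A$$(w,v)
    - A$$(v,u)*A$$(u,v)*A$$(w,w) + A$$(v,u)*A$$(u,w)*A$$(w,v)
    + A$$(w,u)*A$$(u,v)*A$$(v,w) - A$$(w,u)*A$$(u,w)*A$$(v,v))"
proof -
  define I where "I = {u,v,w}"
  have e: "{i. i < dim_row A \<and> i \<in> I} = I" using A uvw unfolding I_def by auto
  have e2: "{i. i < dim_col A \<and> i \<in> I} = I" using A uvw unfolding I_def by auto
  have cI: "card I = 3" using uvw unfolding I_def by auto
  have S: "submatrix A I I \<in> carrier_mat 3 3" unfolding carrier_mat_def by (simp add: dim_submatrix e e2 cI)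
  have mem: "u \<in> I" "v \<in> I" "w \<in> I" unfolding I_def by auto
  have "{a\<in>I. a < u} = {}" using uvw unfolding I_def by auto
  then have c0: "card {a\<in>I. a < u} = 0" by simp
  have "{a\<in>I. a < v} = {u}" using uvw unfolding I_def by auto
  then have c1: "card {a\<in>I. a < v} = 1" by simp
  have "{a\<in>I. a < w} = {u,v}" using uvw unfolding I_def by auto
  then have c2: "card {a\<in>I. a < w} = 2" using uvw by simp
  note p0 = pick_card_in_set[OF mem(1), unfolded c0]
  note p1 = pick_card_in_set[OF mem(2), unfolded c1]
  note p2 = pick_card_in_set[OF mem(3), unfolded c2]
  have ent: "submatrix A I I $$ (i,j) = A $$ (pick I i, pick I j)" if "i < 3" "j < 3" for i j
    by (rule submatrix_index, insert that, simp_all add: e e2 cI)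
  have nS: "- submatrix A I I \<in> carrier_mat 3 3" using S by (rule uminus_carrier_mat)
  have "poly (char_poly (submatrix A I I)) 0 = det (- submatrix A I I)" by (rule poly_char_poly_0[OF S])
  also have "\<dots> = - (A$$(u,u)*A$$(v,v)*A$$(w,w) - A$$(u,u)*A$$(v,w)*A$$(w,v)
    - A$$(v,u)*A$$(u,v)*A$$(w,w) + A$$(v,u)*A$$(u,w)*A$$(w,v)
    + A$$(w,u)*A$$(u,v)*A$$(v,w) - A$$(w,u)*A$$(u,w)*A$$(v,v))"
  proof -
    have "det (- submatrix A I I) = (- submatrix A I I)$$(0,0)*(- submatrix A I I)$$(1,1)*(- submatrix A I I)$$(2,2) - (- submatrix A I I)$$(0,0)*(- submatrix A I I)$$(1,2)*(- submatrix A I I)$$(2,1)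
    - (- submatrix A I I)$$(1,0)*(- submatrix A I I)$$(0,1)*(- submatrix A I I)$$(2,2) + (- submatrix A I I)$$(1,0)*(- submatrix A I I)$$(0,2)*(- submatrix A I I)$$(2,1)
    + (- submatrix A I I)$$(2,0)*(- submatrix A I I)$$(0,1)*(- submatrix A I I)$$(1,2) - (- submatrix A I I)$$(2,0)*(- submatrix A I I)$$(0,2)*(- submatrix A I I)$$(1,1)"
      by (rule det3[OF nS])
    note d = this
    have n: "\<And>i j. i < 3 \<Longrightarrow> j < 3 \<Longrightarrow> (- submatrix A I I)$$(i,j) = - A $$ (pick I i, pick I j)"
      using S ent by (simp add: carrier_matD)
    have m00: "(- submatrix A I I)$$(0,0) = - A $$ (u,u)" using n[of 0 0] p0 p1 p2 by simp
    have m01: "(- submatrix A I I)$$(0,1) = - A $$ (u,v)" using n[of 0 1] p0 p1 p2 by simp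
    have m02: "(- submatrix A I I)$$(0,2) = - A $$ (u,w)" using n[of 0 2] p0 p1 p2 by simp
    have m10: "(- submatrix A I I)$$(1,0) = - A $$ (v,u)" using n[of 1 0] p0 p1 p2 by simp
    have m11: "(- submatrix A I I)$$(1,1) = - A $$ (v,v)" using n[of 1 1] p0 p1 p2 by simp
    have m12: "(- submatrix A I I)$$(1,2) = - A $$ (v,w)" using n[of 1 2] p0 p1 p2 by simp
    have m20: "(- submatrix A I I)$$(2,0) = - A $$ (w,u)" using n[of 2 0] p0 p1 p2 by simp
    have m21: "(- submatrix A I I)$$(2,1) = - A $$ (w,v)" using n[of 2 1] p0 p1 p2 by simp
    have m22: "(- submatrix A I I)$$(2,2) = - A $$ (w,w)" using n[of 2 2] p0 p1 p2 by simp
    show ?thesis unfolding d m00 m01 m02 m10 m11 m12 m20 m21 m22 by (simp add: algebra_simps)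
  qed
  finally show ?thesis unfolding I_def .
qed



lemma g_formula:
  assumes T: "tournament_matrix n A" and xyz: "x < n" "y < n" "z < n" "x \<noteq> y" "y \<noteq> z" "x \<noteq> z"
  shows "poly (char_poly (submatrix A {x,y,z} {x,y,z})) 0 =
     - (A$$(x,y)*A$$(y,z)*A$$(z,x) + A$$(x,z)*A$$(z,y)*A$$(y,x))"
proof -
  have A: "A \<in> carrier_mat n n" and dz: "\<And>i. i < n \<Longrightarrow> A $$ (i,i) = 0"
    using T unfolding tournament_matrix_def by auto
  define c where "c = (\<lambda>x y z. A$$(x,y)*A$$(y,z)*A$$(z,x) + A$$(x,z)*A$$(z,y)*A$$(y,x))"
  have key: "poly (char_poly (submatrix A {a,b,d} {a,b,d})) 0 = - c a b d"
    if "a < b" "b < d" "d < n" for a b d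
    using sub3[OF A that] dz[of a] dz[of b] dz[of d] that unfolding c_def
    by (simp add: algebra_simps)
  have sym: "c x y z = c y x z" "c x y z = c x z y" "c x y z = c z y x"
     "c x y z = c y z x" "c x y z = c z x y" unfolding c_def by (simp_all add: algebra_simps)
  have "poly (char_poly (submatrix A {x,y,z} {x,y,z})) 0 = - c x y z"
  proof (cases "x < y")
    case xy: True
    show ?thesis
    proof (cases "y < z")
      case True then show ?thesis using key[of x y z] xy xyz by simp
    next
      case False
      then have yz: "z < y" using xyz by auto
      show ?thesis
      proof (cases "x < z")
        case True
        have "{x,y,z} = {x,z,y}" by auto
        then show ?thesis using key[of x z y] True yz xyz sym by simp
      next
        case False
        then have "z < x" using xyz by auto
        have "{x,y,z} = {z,x,y}" by auto
        then show ?thesis using key[of z x y] \<open>z < x\<close> xy xyz sym by simp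
      qed
    qed
  next
    case False
    then have yx: "y < x" using xyz by auto
    show ?thesis
    proof (cases "x < z")
      case True
      have "{x,y,z} = {y,x,z}" by auto
      then show ?thesis using key[of y x z] True yx xyz sym by simp
    next
      case False
      then have zx: "z < x" using xyz by auto
      show ?thesis
      proof (cases "y < z")
        case True
        have "{x,y,z} = {y,z,x}" by auto
        then show ?thesis using key[of y z x] True zx xyz sym by simp
      next
        case False
        then have "z < y" using xyz by auto
        have "{x,y,z} = {z,y,x}" by auto
        then show ?thesis using key[of z y x] \<open>z < y\<close> yx xyz sym by simp
      qed
    qed
  qed
  then show ?thesis unfolding c_def .
qed

theorem proposition3p1:
  fixes n k :: nat and A :: "int mat"
  assumes "n \<ge> 6" and "3 \<le> k" and "k \<le> n - 3"
    and "tournament_matrix n A"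
    and "spectrally_monomorphic n k A"
  shows "transitive_tournament n A"
proof -
  note T = assms(4)
  have A: "A \<in> carrier_mat n n" and dz: "\<And>i. i < n \<Longrightarrow> A $$ (i,i) = 0"
    and bin: "\<And>i j. i < n \<Longrightarrow> j < n \<Longrightarrow> A $$ (i,j) = 0 \<or> A $$ (i,j) = 1"
    and comp: "\<And>i j. i < n \<Longrightarrow> j < n \<Longrightarrow> i \<noteq> j \<Longrightarrow> A $$ (i,j) + A $$ (j,i) = 1"
    using T unfolding tournament_matrix_def by auto
  define g where "g = (\<lambda>J. poly (char_poly (submatrix A J J)) 0)"
  have sums: "(\<Sum>J\<in>{J. J \<subseteq> I \<and> card J = 3}. g J) = (\<Sum>J\<in>{J. J \<subseteq> I' \<and> card J = 3}. g J)"
    if I: "I \<subseteq> {0..<n}" "I' \<subseteq> {0..<n}" "card I = k" "card I' = k" for I I'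
  proof -
    have f1: "(pderiv ^^ (k-3)) (char_poly (submatrix A I I)) = (pderiv ^^ (k-3)) (char_poly (submatrix A I' I'))"
    proof -
      have "char_poly (submatrix A I I) = char_poly (submatrix A I' I')"
        using assms(5)[unfolded spectrally_monomorphic_def principal_submatrix_def] I by blast
      then show ?thesis by (simp only:)
    qed
    have f2: "(pderiv ^^ (k-3)) (char_poly (submatrix A I I)) = Polynomial.smult (of_nat (fact (k-3)))
      (\<Sum>J\<in>{J. J \<subseteq> I \<and> card J = 3}. char_poly (submatrix A J J))"
      using iter_deriv[OF A I(1), of "k-3"] I(3) assms(2) by simp
    have f3: "(pderiv ^^ (k-3)) (char_poly (submatrix A I' I')) = Polynomial.smult (of_nat (fact (k-3)))
      (\<Sum>J\<in>{J. J \<subseteq> I' \<and> card J = 3}. char_poly (submatrix A J J))"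
      using iter_deriv[OF A I(2), of "k-3"] I(4) assms(2) by simp
    have f4: "Polynomial.smult (of_nat (fact (k-3))) (\<Sum>J\<in>{J. J \<subseteq> I \<and> card J = 3}. char_poly (submatrix A J J))
       = Polynomial.smult (of_nat (fact (k-3))) (\<Sum>J\<in>{J. J \<subseteq> I' \<and> card J = 3}. char_poly (submatrix A J J))"
      by (simp only: f2[symmetric] f3[symmetric] f1)
    have c0: "(of_nat (fact (k-3)) :: int) \<noteq> 0" by simp
    have "(\<Sum>J\<in>{J. J \<subseteq> I \<and> card J = 3}. char_poly (submatrix A J J)) =
       (\<Sum>J\<in>{J. J \<subseteq> I' \<and> card J = 3}. char_poly (submatrix A J J))"
      by (rule smult_cancel[OF c0 f4])
    then show ?thesis unfolding g_def poly_sum[symmetric] by simp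
  qed
  have gc: "g J = g J'" if "J \<subseteq> {0..<n}" "J' \<subseteq> {0..<n}" "card J = 3" "card J' = 3" for J J'
  proof (rule const_sums[of "{0..<n}" 3 k g])
    show "\<forall>S S'. S \<subseteq> {0..<n} \<longrightarrow> S' \<subseteq> {0..<n} \<longrightarrow> card S = k \<longrightarrow> card S' = k \<longrightarrow>
       (\<Sum>T\<in>{T. T \<subseteq> S \<and> card T = 3}. g T) = (\<Sum>T\<in>{T. T \<subseteq> S' \<and> card T = 3}. g T)"
    proof (intro allI impI)
      fix S S' assume SS: "S \<subseteq> {0..<n}" "S' \<subseteq> {0..<n}" "card S = k" "card S' = k"
      show "(\<Sum>T\<in>{T. T \<subseteq> S \<and> card T = 3}. g T) = (\<Sum>T\<in>{T. T \<subseteq> S' \<and> card T = 3}. g T)"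
        by (rule sums[OF SS])
    qed
    show "finite {0..<n}" by simp
    show "3 \<le> k" by (rule assms(2))
    show "k + 3 \<le> card {0..<n}" using assms(1,3) by simp
  qed (rule that)+
  show ?thesis unfolding transitive_tournament_def
  proof (intro allI impI)
    fix u v w assume uvw: "u < n" "v < n" "w < n" "A $$ (u,v) = 1" "A $$ (v,w) = 1"
    have uv: "u \<noteq> v" using uvw dz by auto
    have vw: "v \<noteq> w" using uvw dz by auto
    have uw: "u \<noteq> w" using uvw comp[of u v] uv by auto
    show "A $$ (u,w) = 1"
    proof (rule ccontr)
      assume "A $$ (u,w) \<noteq> 1"
      then have auw: "A $$ (u,w) = 0" using bin[of u w] uvw by auto
      have avu: "A $$ (v,u) = 0" "A $$ (w,v) = 0" "A $$ (w,u) = 1"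
        using comp[of u v] comp[of v w] comp[of u w] uvw uv vw uw auw by auto
      have "finite {u,v,w}" by simp
      have "card ({0..<n} - {u,v,w}) = n - 3"
        using card_Diff_subset[of "{u,v,w}" "{0..<n}"] uvw uv vw uw by auto
      then have "{0..<n} - {u,v,w} \<noteq> {}" using assms(1) by (intro notI) simp
      then obtain x where "x \<in> {0..<n} - {u,v,w}" by blast
      then have x: "x < n" "x \<noteq> u" "x \<noteq> v" "x \<noteq> w" by auto
      have c3: "card {u,v,w} = 3" "card {u,v,x} = 3" "card {v,w,x} = 3" using uv vw uw x by auto
      have s3: "{u,v,w} \<subseteq> {0..<n}" "{u,v,x} \<subseteq> {0..<n}" "{v,w,x} \<subseteq> {0..<n}" using uvw x by auto
      have g1: "g {u,v,w} = -1" unfolding g_def using g_formula[OF T uvw(1-3) uv vw uw] uvw avu auw by simp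
      have "g {u,v,x} = -1" using gc[OF s3(2) s3(1) c3(2) c3(1)] g1 by simp
      then have e1: "A$$(v,x)*A$$(x,u) = 1"
        unfolding g_def using g_formula[OF T uvw(1,2) x(1) uv x(3)[symmetric] x(2)[symmetric]] uvw avu by simp
      have "g {v,w,x} = -1" using gc[OF s3(3) s3(1) c3(3) c3(1)] g1 by simp
      then have e2: "A$$(w,x)*A$$(x,v) = 1"
        unfolding g_def using g_formula[OF T uvw(2,3) x(1) vw x(4)[symmetric] x(3)[symmetric]] uvw avu by simp
      have "A$$(v,x) + A$$(x,v) = 1" using comp[of v x] uvw x by auto
      then show False using e1 e2 bin[of v x] bin[of x v] uvw x by auto
    qed
  qed
qed


end
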